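(* Let $T$ be a ring which is integral over its center $C(T)$ and satisfies $J(T)=0$. Then either $T$ has a maximal subring or $T$ is a commutative ring.
   Context: All rings are associative with identity $1\neq 0$, and subrings contain the identity of the ambient ring. A maximal subring of a ring $T$ is a proper subring $S\subsetneq T$ such that there is no subring strictly between $S$ and $T$. $C(T)$ denotes the center of $T$. $T$ is integral over its center if every $t\in T$ is a root of a monic polynomial of degree $\geq 1$ with coefficients in $C(T)$. $J(T)$ is the Jacobson radical of $T$. *)

theory Defs
  imports Main
begin

text \<open>Rings are modelled as types of class ring_1 (associative, with 1, and 1 ~= 0
  via zero_neq_one). Subrings contain the identity.\<close>

definition is_subring :: "'a::ring_1 set \<Rightarrow> bool" where
  "is_subring S \<longleftrightarrow> 1 \<in> S \<and> 0 \<in> S \<and> (\<forall>x\<in>S. \<forall>y\<in>S. x + y \<in> S \<and> x * y \<in> S) \<and> (\<forall>x\<in>S. - x \<in> S)"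

definition maximal_subring :: "'a::ring_1 set \<Rightarrow> bool" where
  "maximal_subring S \<longleftrightarrow> is_subring S \<and> S \<noteq> UNIV \<and>
     (\<forall>R. is_subring R \<and> S \<subseteq> R \<longrightarrow> R = S \<or> R = UNIV)"

definition center :: "'a::ring_1 set" where
  "center = {z. \<forall>x. z * x = x * z}"

definition integral_over_center :: "'a::ring_1 itself \<Rightarrow> bool" where
  "integral_over_center _ \<longleftrightarrow> (\<forall>t::'a. \<exists>n::nat. \<exists>c::nat \<Rightarrow> 'a. n \<ge> 1 \<and>
      (\<forall>i<n. c i \<in> center) \<and> t ^ n + (\<Sum>i<n. c i * t ^ i) = 0)"

definition left_ideal :: "'a::ring_1 set \<Rightarrow> bool" where
  "left_ideal I \<longleftrightarrow> 0 \<in> I \<and> (\<forall>x\<in>I. \<forall>y\<in>I. x + y \<in> I) \<and> (\<forall>x\<in>I. - x \<in> I)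
     \<and> (\<forall>r. \<forall>x\<in>I. r * x \<in> I)"

definition maximal_left_ideal :: "'a::ring_1 set \<Rightarrow> bool" where
  "maximal_left_ideal I \<longleftrightarrow> left_ideal I \<and> I \<noteq> UNIV \<and>
     (\<forall>K. left_ideal K \<and> I \<subseteq> K \<longrightarrow> K = I \<or> K = UNIV)"

definition jacobson :: "'a::ring_1 set" where
  "jacobson = \<Inter>{I. maximal_left_ideal I}"

end

theory Submission
  imports Defs
begin


lemma li_zero: "left_ideal M \<Longrightarrow> 0 \<in> M" by (simp add: left_ideal_def)
lemma li_add: "left_ideal M \<Longrightarrow> a \<in> M \<Longrightarrow> b \<in> M \<Longrightarrow> a + b \<in> M" by (simp add: left_ideal_def)
lemma li_neg: "left_ideal M \<Longrightarrow> a \<in> M \<Longrightarrow> - a \<in> M" by (simp add: left_ideal_def)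
lemma li_lm: "left_ideal M \<Longrightarrow> a \<in> M \<Longrightarrow> r * a \<in> M" by (simp add: left_ideal_def)
lemma li_diff: "left_ideal M \<Longrightarrow> a \<in> M \<Longrightarrow> b \<in> M \<Longrightarrow> a - b \<in> M"
  by (metis li_add li_neg diff_conv_add_uminus)
lemma li_neg_iff: "left_ideal M \<Longrightarrow> - a \<in> M \<longleftrightarrow> a \<in> M"
  by (metis li_neg minus_minus)
lemma li_sum: "finite I \<Longrightarrow> left_ideal M \<Longrightarrow> (\<forall>i\<in>I. f i \<in> M) \<Longrightarrow> sum f I \<in> M"
  by (induction I rule: finite_induct) (auto simp: li_zero li_add)
lemma li_one: "left_ideal M \<Longrightarrow> M \<noteq> UNIV \<Longrightarrow> 1 \<notin> M"
  by (metis UNIV_eq_I li_lm mult.right_neutral)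

lemma idealizer_max:
  fixes M :: "'a::ring_1 set"
  assumes mx: "maximal_left_ideal M" and nr: "\<not>(\<forall>m\<in>M. \<forall>t. m*t \<in> M)"
  shows "maximal_subring {t. \<forall>m\<in>M. m*t \<in> M}"
proof -
  define I where "I = {t. \<forall>m\<in>M. m*t \<in> M}"
  have li: "left_ideal M" and nU: "M \<noteq> UNIV"
   and mxx: "\<And>K. left_ideal K \<Longrightarrow> M \<subseteq> K \<Longrightarrow> K = M \<or> K = UNIV"
    using mx by (auto simp: maximal_left_ideal_def)
  have sub: "is_subring I"
    unfolding is_subring_def I_def
    using li by (auto simp: li_zero li_add li_neg distrib_left mult.assoc[symmetric])
  have MI: "M \<subseteq> I" unfolding I_def using li by (auto simp: li_lm)
  have IU: "I \<noteq> UNIV" using nr unfolding I_def by auto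
  have "\<forall>R. is_subring R \<and> I \<subseteq> R \<longrightarrow> R = I \<or> R = UNIV"
  proof (intro allI impI)
    fix R assume R: "is_subring R \<and> I \<subseteq> R"
    show "R = I \<or> R = UNIV"
    proof (cases "R = I")
      case False
      then obtain a where aR: "a \<in> R" and aI: "a \<notin> I" using R by blast
      then obtain m0 where m0: "m0 \<in> M" "m0 * a \<notin> M" unfolding I_def by blast
      define K where "K = {m * a + m' | m m'. m \<in> M \<and> m' \<in> M}"
      have "left_ideal K"
        unfolding left_ideal_def K_def
      proof (intro conjI ballI allI)
        show "0 \<in> {m * a + m' | m m'. m \<in> M \<and> m' \<in> M}"
          using li_zero[OF li] by (metis (mono_tags, lifting) add_0 mem_Collect_eq mult_zero_left)
      next
        fix u v assume "u \<in> {m * a + m' | m m'. m \<in> M \<and> m' \<in> M}" "v \<in> {m * a + m' | m m'. m \<in> M \<and> m' \<in> M}"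
        then obtain m1 m1' m2 m2' where "u = m1*a + m1'" "v = m2*a+m2'" "m1\<in>M" "m1'\<in>M" "m2\<in>M" "m2'\<in>M" by blast
        then show "u + v \<in> {m * a + m' | m m'. m \<in> M \<and> m' \<in> M}"
          by (intro CollectI exI[of _ "m1+m2"] exI[of _ "m1'+m2'"]) (auto simp: li_add[OF li] algebra_simps)
      next
        fix u assume "u \<in> {m * a + m' | m m'. m \<in> M \<and> m' \<in> M}"
        then obtain m1 m1' where "u = m1*a + m1'" "m1\<in>M" "m1'\<in>M" by blast
        then show "- u \<in> {m * a + m' | m m'. m \<in> M \<and> m' \<in> M}"
          by (intro CollectI exI[of _ "-m1"] exI[of _ "-m1'"]) (auto simp: li_neg[OF li] algebra_simps)
      next
        fix r u assume "u \<in> {m * a + m' | m m'. m \<in> M \<and> m' \<in> M}"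
        then obtain m1 m1' where "u = m1*a + m1'" "m1\<in>M" "m1'\<in>M" by blast
        then show "r * u \<in> {m * a + m' | m m'. m \<in> M \<and> m' \<in> M}"
          by (intro CollectI exI[of _ "r*m1"] exI[of _ "r*m1'"]) (auto simp: li_lm[OF li] algebra_simps)
      qed
      moreover have "M \<subseteq> K" unfolding K_def
      proof
        fix m assume "m \<in> M" then show "m \<in> {m * a + m' | m m'. m \<in> M \<and> m' \<in> M}"
          using li_zero[OF li] by (intro CollectI exI[of _ 0] exI[of _ m]) auto
      qed
      moreover have "m0 * a \<in> K" unfolding K_def using m0 li_zero[OF li]
        by (intro CollectI exI[of _ m0] exI[of _ 0]) auto
      ultimately have KU: "K = UNIV" using mxx m0 by blast
      have "\<forall>t. t \<in> R"
      proof
        fix t have "t \<in> K" using KU by auto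
        then obtain m m' where t: "t = m*a + m'" "m \<in> M" "m' \<in> M" unfolding K_def by blast
        have "m \<in> R" "m' \<in> R" using t MI R by auto
        then show "t \<in> R" using R aR t unfolding is_subring_def by auto
      qed
      then show ?thesis by auto
    qed simp
  qed
  then show ?thesis using sub IU unfolding maximal_subring_def I_def by blast
qed



inductive_set bim :: "(nat \<Rightarrow> 'a::ring_1) \<Rightarrow> (nat \<Rightarrow> 'a) set" for a where
  base: "a \<in> bim a"
| zero: "(\<lambda>i. 0) \<in> bim a"
| add: "f \<in> bim a \<Longrightarrow> g \<in> bim a \<Longrightarrow> (\<lambda>i. f i + g i) \<in> bim a"
| lm: "f \<in> bim a \<Longrightarrow> (\<lambda>i. t * f i) \<in> bim a"
| rm: "f \<in> bim a \<Longrightarrow> (\<lambda>i. f i * t) \<in> bim a"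

lemma bim_sum: "finite I \<Longrightarrow> (\<forall>i\<in>I. F i \<in> bim a) \<Longrightarrow> (\<lambda>j. \<Sum>i\<in>I. F i j) \<in> bim a"
proof (induction I rule: finite_induct)
  case empty then show ?case by (simp add: bim.zero)
next
  case (insert i I)
  have "F i \<in> bim a" using insert by auto
  then have "(\<lambda>j. F i j) \<in> bim a" by simp
  then show ?case using insert bim.add[of "\<lambda>j. F i j" a "\<lambda>j. \<Sum>i\<in>I. F i j"] by simp
qed

fun SF :: "(nat \<Rightarrow> 'a::ring_1) \<Rightarrow> 'a \<Rightarrow> 'a \<Rightarrow> nat \<Rightarrow> 'a" where
  "SF f d x 0 = 0"
| "SF f d x (Suc k) = f k * d + SF f d x k * x"

lemma SF_zero: "SF (\<lambda>i. 0) d x k = 0" by (induction k) auto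
lemma SF_add: "SF (\<lambda>i. f i + g i) d x k = SF f d x k + SF g d x k"
  by (induction k) (auto simp: algebra_simps)
lemma SF_lm: "SF (\<lambda>i. t * f i) d x k = t * SF f d x k"
  by (induction k) (auto simp: algebra_simps)
lemma SF_rm: "SF (\<lambda>i. f i * t) d x k = SF f (t * d) x k"
  by (induction k) (auto simp: algebra_simps)
lemma SF_comm: "x * SF (\<lambda>i. x^i) d x k - SF (\<lambda>i. x^i) d x k * x = x^k * d - d * x^k"
proof (induction k)
  case 0 then show ?case by simp
next
  case (Suc k)
  have "x * SF (\<lambda>i. x^i) d x (Suc k) - SF (\<lambda>i. x^i) d x (Suc k) * x
      = x^(Suc k) * d - x^k*d*x + (x * SF (\<lambda>i. x^i) d x k - SF (\<lambda>i. x^i) d x k * x) * x"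
    by (simp add: algebra_simps)
  also have "\<dots> = x^(Suc k) * d - x^k*d*x + (x^k * d - d * x^k) * x" using Suc by simp
  also have "\<dots> = x^(Suc k) * d - d * x^(Suc k)"
    by (simp add: algebra_simps power_Suc2 del: power_Suc)
  finally show ?case .
qed

lemma SF_cong:
  assumes li: "left_ideal M" and rid: "\<And>m t. m \<in> M \<Longrightarrow> m*t \<in> M"
  shows "(\<forall>i<k. f i - g i \<in> M) \<Longrightarrow> SF f d x k - SF g d x k \<in> M"
proof (induction k)
  case 0 then show ?case by (simp add: li_zero[OF li])
next
  case (Suc k)
  have "SF f d x (Suc k) - SF g d x (Suc k) = (f k - g k) * d + (SF f d x k - SF g d x k) * x"
    by (simp add: algebra_simps)
  moreover have "(f k - g k) * d \<in> M" using Suc.prems rid by auto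
  moreover have "(SF f d x k - SF g d x k) * x \<in> M" using Suc rid by auto
  ultimately show ?case using li_add[OF li] by auto
qed



locale divcase =
  fixes M :: "'a::ring_1 set" and x y :: 'a
  assumes li: "left_ideal M" and nU: "M \<noteq> UNIV"
    and rid: "\<And>m t. m \<in> M \<Longrightarrow> m*t \<in> M"
    and linv: "\<And>t. t \<notin> M \<Longrightarrow> \<exists>s. s*t - 1 \<in> M"
    and xy: "x*y - y*x \<notin> M"
    and integ: "\<exists>n c. n \<ge> 1 \<and> (\<forall>i<n. c i \<in> center) \<and> x^n + (\<Sum>i<n. c i * x^i) = 0"
begin

lemma M0: "0 \<in> M" using li_zero[OF li] .
lemma Madd: "a \<in> M \<Longrightarrow> b \<in> M \<Longrightarrow> a + b \<in> M" using li_add[OF li] .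
lemma Mneg: "a \<in> M \<Longrightarrow> - a \<in> M" using li_neg[OF li] .
lemma Mneg_iff: "- a \<in> M \<longleftrightarrow> a \<in> M" using li_neg_iff[OF li] .
lemma Mdiff: "a \<in> M \<Longrightarrow> b \<in> M \<Longrightarrow> a - b \<in> M" using li_diff[OF li] .
lemma Mlm: "a \<in> M \<Longrightarrow> r * a \<in> M" using li_lm[OF li] .
lemma Mrm: "a \<in> M \<Longrightarrow> a * r \<in> M" using rid .
lemma Msum: "finite I \<Longrightarrow> (\<forall>i\<in>I. f i \<in> M) \<Longrightarrow> sum f I \<in> M" using li_sum li by blast
lemma M1: "1 \<notin> M" using li_one[OF li nU] .
lemma Mswap: "a - b \<in> M \<Longrightarrow> b - a \<in> M"
  using Mneg by (metis minus_diff_eq)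

definition Zm where "Zm = {z. \<forall>t. z*t - t*z \<in> M}"

lemma Zm_1: "1 \<in> Zm" unfolding Zm_def using M0 by simp
lemma Zm_neg: "z \<in> Zm \<Longrightarrow> - z \<in> Zm"
proof -
  assume "z \<in> Zm"
  then have "\<forall>t. -(z*t - t*z) \<in> M" unfolding Zm_def using Mneg by blast
  then show ?thesis unfolding Zm_def by (simp add: algebra_simps)
qed
lemma Zm_mult: "z1 \<in> Zm \<Longrightarrow> z2 \<in> Zm \<Longrightarrow> z1 * z2 \<in> Zm"
proof -
  assume a: "z1 \<in> Zm" "z2 \<in> Zm"
  { fix t
    have "z1*z2*t - t*(z1*z2) = z1*(z2*t - t*z2) + (z1*t - t*z1)*z2" by (simp add: algebra_simps)
    moreover have "z1*(z2*t - t*z2) \<in> M" using a Mlm unfolding Zm_def by blast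
    moreover have "(z1*t - t*z1)*z2 \<in> M" using a Mrm unfolding Zm_def by blast
    ultimately have "z1*z2*t - t*(z1*z2) \<in> M" using Madd by simp }
  then show ?thesis unfolding Zm_def by blast
qed
lemma center_Zm: "z \<in> center \<Longrightarrow> z \<in> Zm" unfolding Zm_def center_def using M0 by simp

lemma Zm_inv:
  assumes a: "\<alpha> \<in> Zm" "\<alpha> \<notin> M"
  shows "\<exists>\<beta>\<in>Zm. \<alpha>*\<beta> - 1 \<in> M \<and> \<beta>*\<alpha> - 1 \<in> M"
proof -
  obtain s where s: "s*\<alpha> - 1 \<in> M" using linv a by blast
  have c1: "\<alpha>*s - s*\<alpha> \<in> M" using a unfolding Zm_def by blast
  have as: "\<alpha>*s - 1 \<in> M" using Madd[OF c1 s] by simp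
  have "s \<in> Zm" unfolding Zm_def
  proof (intro CollectI allI)
    fix t
    have "s*t - t*s = (s*t)*(-(\<alpha>*s - 1)) + s*(t*\<alpha> - \<alpha>*t)*s + (s*\<alpha> - 1)*t*s"
      by (simp add: algebra_simps)
    moreover have "(s*t)*(-(\<alpha>*s - 1)) \<in> M" using Mlm Mneg as by blast
    moreover have "s*(t*\<alpha> - \<alpha>*t)*s \<in> M"
      using a Mlm Mrm Mswap unfolding Zm_def by blast
    moreover have "(s*\<alpha> - 1)*t*s \<in> M" using s Mrm by blast
    ultimately show "s*t - t*s \<in> M" using Madd by simp
  qed
  then show ?thesis using s as by blast
qed

definition P where "P k \<longleftrightarrow> k \<ge> 1 \<and> (\<exists>c. (\<forall>i<k. c i \<in> Zm) \<and> x^k + (\<Sum>i<k. x^i * c i) \<in> M)"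
definition N where "N = (LEAST k. P k)"

lemma P_ex: "\<exists>k. P k"
proof -
  obtain n c where nc: "n \<ge> 1" "\<forall>i<n. c i \<in> center" "x^n + (\<Sum>i<n. c i * x^i) = 0"
    using integ by blast
  have "(\<Sum>i<n. c i * x^i) = (\<Sum>i<n. x^i * c i)"
    using nc(2) by (intro sum.cong) (auto simp: center_def)
  then have "x^n + (\<Sum>i<n. x^i * c i) \<in> M" using nc(3) M0 by simp
  then show ?thesis unfolding P_def using nc center_Zm by blast
qed

lemma PN: "P N" unfolding N_def using P_ex by (rule LeastI_ex)
lemma N_min: "k < N \<Longrightarrow> \<not> P k" unfolding N_def by (rule not_less_Least)
lemma N_ge1: "N \<ge> 1" using PN unfolding P_def by simp

lemma indep: "m \<le> N \<Longrightarrow> \<forall>\<alpha>. (\<forall>i<m. \<alpha> i \<in> Zm) \<longrightarrow> (\<Sum>i<m. x^i * \<alpha> i) \<in> M \<longrightarrow> (\<forall>i<m. \<alpha> i \<in> M)"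
proof (induction m)
  case 0 then show ?case by simp
next
  case (Suc m)
  show ?case
  proof (rule allI, rule impI, rule impI)
    fix \<alpha> :: "nat \<Rightarrow> 'a"
    assume Z: "\<forall>i<Suc m. \<alpha> i \<in> Zm" and S: "(\<Sum>i<Suc m. x^i * \<alpha> i) \<in> M"
    have split: "(\<Sum>i<Suc m. x^i * \<alpha> i) = (\<Sum>i<m. x^i * \<alpha> i) + x^m * \<alpha> m" by simp
    show "\<forall>i<Suc m. \<alpha> i \<in> M"
    proof (cases "\<alpha> m \<in> M")
      case True
      have "x^m * \<alpha> m \<in> M" using True Mlm by blast
      then have "(\<Sum>i<m. x^i * \<alpha> i) \<in> M" using Mdiff[OF S] split by force
      then have "\<forall>i<m. \<alpha> i \<in> M" using Suc Z by auto
      then show ?thesis using True less_Suc_eq by auto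
    next
      case False
      obtain \<beta> where b: "\<beta> \<in> Zm" "\<alpha> m * \<beta> - 1 \<in> M" using Zm_inv[OF _ False] Z by blast
      show ?thesis
      proof (cases "m = 0")
        case True
        then have "\<alpha> 0 \<in> M" using S by simp
        then show ?thesis using False True by simp
      next
        case False
        have "x^m + (\<Sum>i<m. x^i * (\<alpha> i * \<beta>)) = (\<Sum>i<Suc m. x^i * \<alpha> i) * \<beta> - x^m * (\<alpha> m * \<beta> - 1)"
          by (simp add: algebra_simps sum_distrib_right)
        moreover have "(\<Sum>i<Suc m. x^i * \<alpha> i) * \<beta> \<in> M" using S Mrm by blast
        moreover have "x^m * (\<alpha> m * \<beta> - 1) \<in> M" using b Mlm by blast
        ultimately have "x^m + (\<Sum>i<m. x^i * (\<alpha> i * \<beta>)) \<in> M" using Mdiff by simp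
        moreover have "\<forall>i<m. \<alpha> i * \<beta> \<in> Zm" using Z b Zm_mult by auto
        ultimately have "P m" unfolding P_def using False by (intro conjI exI[of _ "\<lambda>i. \<alpha> i * \<beta>"]) auto
        then show ?thesis using N_min Suc.prems by simp
      qed
    qed
  qed
qed

end



context divcase begin

lemma bim_hit: "m \<le> N \<Longrightarrow> \<forall>g. \<exists>f\<in>bim (\<lambda>i. x^i). \<forall>i<m. f i - g i \<in> M"
proof (induction m)
  case 0 then show ?case using bim.zero by auto
next
  case (Suc m)
  let ?a = "\<lambda>i::nat. x^i"
  have IH: "\<forall>g. \<exists>f\<in>bim ?a. \<forall>i<m. f i - g i \<in> M" using Suc by simp
  show ?case
  proof (cases "\<exists>h\<in>bim ?a. (\<forall>i<m. h i \<in> M) \<and> h m \<notin> M")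
    case True
    then obtain h where h: "h \<in> bim ?a" "\<forall>i<m. h i \<in> M" "h m \<notin> M" by blast
    obtain \<beta> where b: "\<beta> * h m - 1 \<in> M" using linv h(3) by blast
    show ?thesis
    proof
      fix g :: "nat \<Rightarrow> 'a"
      obtain f1 where f1: "f1 \<in> bim ?a" "\<forall>i<m. f1 i - g i \<in> M" using IH by blast
      define u where "u = g m - f1 m"
      define f2 where "f2 = (\<lambda>i. f1 i + u * (\<beta> * h i))"
      have "(\<lambda>i. \<beta> * h i) \<in> bim ?a" using h(1) by (rule bim.lm)
      then have "(\<lambda>i. u * (\<beta> * h i)) \<in> bim ?a" by (rule bim.lm)
      then have f2b: "f2 \<in> bim ?a" unfolding f2_def by (rule bim.add[OF f1(1)])
      have "\<forall>i<Suc m. f2 i - g i \<in> M"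
      proof (intro allI impI)
        fix i assume i: "i < Suc m"
        show "f2 i - g i \<in> M"
        proof (cases "i < m")
          case True
          have eq: "f2 i - g i = (f1 i - g i) + u * (\<beta> * h i)" unfolding f2_def by (simp add: algebra_simps)
          have B: "u * (\<beta> * h i) \<in> M" using h(2) True Mlm by blast
          have A: "f1 i - g i \<in> M" using f1(2) True by blast
          show ?thesis unfolding eq by (rule Madd[OF A B])
        next
          case False
          then have "i = m" using i by simp
          have "f2 m - g m = u * (\<beta> * h m - 1)" unfolding f2_def u_def by (simp add: algebra_simps)
          then show ?thesis using \<open>i = m\<close> b Mlm by simp
        qed
      qed
      then show "\<exists>f\<in>bim ?a. \<forall>i<Suc m. f i - g i \<in> M" using f2b by blast
    qed
  next
    case False
    then have no: "\<And>h. h \<in> bim ?a \<Longrightarrow> \<forall>i<m. h i \<in> M \<Longrightarrow> h m \<in> M" by blast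
    have "\<forall>i. \<exists>f. f \<in> bim ?a \<and> (\<forall>j<m. f j - (if j = i then 1 else 0) \<in> M)"
    proof
      fix i
      obtain f where "f \<in> bim ?a" "\<forall>j<m. f j - (if j = i then 1 else 0) \<in> M"
        using IH[rule_format, of "\<lambda>j. if j = i then 1 else 0"] by blast
      then show "\<exists>f. f \<in> bim ?a \<and> (\<forall>j<m. f j - (if j = i then 1 else 0) \<in> M)" by blast
    qed
    then have "\<exists>L. \<forall>i. L i \<in> bim ?a \<and> (\<forall>j<m. L i j - (if j = i then 1 else 0) \<in> M)"
      by (rule choice)
    then obtain L where LL: "\<forall>i. L i \<in> bim ?a \<and> (\<forall>j<m. L i j - (if j = i then 1 else 0) \<in> M)"
      by blast
    have L: "\<And>i. L i \<in> bim ?a" "\<And>i j. j < m \<Longrightarrow> L i j - (if j = i then 1 else 0) \<in> M"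
      using LL by auto
    have cZ: "L i m \<in> Zm" for i
    proof -
      { fix t
        have "(\<lambda>j. L i j * t) \<in> bim ?a" using L(1) by (rule bim.rm)
        then have c1: "(\<lambda>j. (-1) * (L i j * t)) \<in> bim ?a" by (rule bim.lm)
        have c2: "(\<lambda>j. t * L i j) \<in> bim ?a" using L(1) by (rule bim.lm)
        have hb: "(\<lambda>j. t * L i j + (-1) * (L i j * t)) \<in> bim ?a" using bim.add[OF c2 c1] by simp
        have "\<forall>j<m. t * L i j + (-1) * (L i j * t) \<in> M"
        proof (intro allI impI)
          fix j assume j: "j < m"
          define e where "e = L i j - (if j = i then 1 else 0)"
          have e: "e \<in> M" using L(2) j unfolding e_def by blast
          have "t * L i j + (-1) * (L i j * t) = t * e - e * t"
            unfolding e_def by (simp add: algebra_simps)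
          then show "t * L i j + (-1) * (L i j * t) \<in> M" using e Mlm Mrm Mdiff by simp
        qed
        then have "t * L i m + (-1) * (L i m * t) \<in> M" using no[OF hb] by blast
        then have "t * L i m - L i m * t \<in> M" by simp
        then have "L i m * t - t * L i m \<in> M" by (rule Mswap) }
      then show ?thesis unfolding Zm_def by blast
    qed
    have "(\<lambda>j. \<Sum>i<m. ?a i * L i j) \<in> bim ?a"
      by (rule bim_sum) (auto intro: bim.lm L(1))
    then have c3: "(\<lambda>j. (-1) * (\<Sum>i<m. ?a i * L i j)) \<in> bim ?a" by (rule bim.lm)
    have hb: "(\<lambda>j. ?a j + (-1) * (\<Sum>i<m. ?a i * L i j)) \<in> bim ?a"
      using bim.add[OF bim.base c3] by simp
    have "\<forall>j<m. ?a j + (-1) * (\<Sum>i<m. ?a i * L i j) \<in> M"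
    proof (intro allI impI)
      fix j assume j: "j < m"
      have s1: "(\<Sum>i<m. ?a i * L i j) = (\<Sum>i<m. ?a i * (L i j - (if j = i then 1 else 0))) + (\<Sum>i<m. ?a i * (if j = i then 1 else 0))"
        unfolding sum.distrib[symmetric] by (simp add: right_diff_distrib)
      have e1: "(\<lambda>i. ?a i * (if j = i then 1 else 0)) = (\<lambda>i. if j = i then ?a i else 0)" by auto
      have s2: "(\<Sum>i<m. ?a i * (if j = i then 1 else 0)) = ?a j"
        unfolding e1 using j by (simp add: sum.delta)
      have s3: "(\<Sum>i<m. ?a i * (L i j - (if j = i then 1 else 0))) \<in> M"
        using L(2) j Mlm by (intro Msum) auto
      have "?a j + (-1) * (\<Sum>i<m. ?a i * L i j) = - (\<Sum>i<m. ?a i * (L i j - (if j = i then 1 else 0)))"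
        using s1 s2 by simp
      then show "?a j + (-1) * (\<Sum>i<m. ?a i * L i j) \<in> M" using s3 Mneg by simp
    qed
    then have hm: "?a m + (-1) * (\<Sum>i<m. ?a i * L i m) \<in> M" using no[OF hb] by blast
    define \<alpha> where "\<alpha> = (\<lambda>i. if i < m then - L i m else 1)"
    have "(\<Sum>i<m. x^i * \<alpha> i) = (\<Sum>i<m. - (?a i * L i m))"
      unfolding \<alpha>_def by (intro sum.cong) auto
    then have "(\<Sum>i<Suc m. x^i * \<alpha> i) = ?a m + (-1) * (\<Sum>i<m. ?a i * L i m)"
      unfolding \<alpha>_def by (simp add: sum_negf)
    then have "(\<Sum>i<Suc m. x^i * \<alpha> i) \<in> M" using hm by simp
    moreover have "\<forall>i<Suc m. \<alpha> i \<in> Zm" unfolding \<alpha>_def using cZ Zm_neg Zm_1 by auto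
    ultimately have "\<forall>i<Suc m. \<alpha> i \<in> M" using indep[OF Suc.prems] by blast
    then have "\<alpha> m \<in> M" by simp
    then show ?thesis unfolding \<alpha>_def using M1 by simp
  qed
qed

end


context divcase begin

definition Em where "Em = {e. e*x - x*e \<in> M}"

lemma Em_sub: "is_subring Em"
  unfolding is_subring_def
proof (intro conjI ballI)
  show "1 \<in> Em" "0 \<in> Em" unfolding Em_def using M0 by auto
next
  fix a b assume a: "a \<in> Em" and b: "b \<in> Em"
  have "(a+b)*x - x*(a+b) = (a*x - x*a) + (b*x - x*b)" by (simp add: algebra_simps)
  then show "a + b \<in> Em" using a b Madd unfolding Em_def by auto
  have "(a*b)*x - x*(a*b) = a*(b*x - x*b) + (a*x - x*a)*b" by (simp add: algebra_simps)
  moreover have "a*(b*x - x*b) \<in> M" using b Mlm unfolding Em_def by blast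
  moreover have "(a*x - x*a)*b \<in> M" using a Mrm unfolding Em_def by blast
  ultimately show "a * b \<in> Em" using Madd unfolding Em_def by auto
next
  fix a assume a: "a \<in> Em"
  have "(-a)*x - x*(-a) = - (a*x - x*a)" by (simp add: algebra_simps)
  moreover have "- (a*x - x*a) \<in> M" using a Mneg unfolding Em_def by blast
  ultimately show "- a \<in> Em" unfolding Em_def by simp
qed

lemma M_Em: "M \<subseteq> Em" unfolding Em_def using Mlm Mrm Mdiff by blast

lemma y_Em: "y \<notin> Em"
proof
  assume "y \<in> Em"
  then have "y*x - x*y \<in> M" unfolding Em_def by simp
  then have "x*y - y*x \<in> M" by (rule Mswap)
  then show False using xy by simp
qed

lemma exists_max: "\<exists>S::'a set. maximal_subring S"
proof -
  obtain c where c: "\<forall>i<N. c i \<in> Zm" "x^N + (\<Sum>i<N. x^i * c i) \<in> M"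
    using PN unfolding P_def by blast
  define cc where "cc = (\<lambda>k. if k = N then 1 else c k)"
  have ccZ: "cc k \<in> Zm" if "k < Suc N" for k
    using that c(1) Zm_1 unfolding cc_def by auto
  define p where "p = (\<Sum>k<Suc N. x^k * cc k)"
  have "p = x^N + (\<Sum>k<N. x^k * cc k)" unfolding p_def by (simp add: cc_def)
  also have "(\<Sum>k<N. x^k * cc k) = (\<Sum>k<N. x^k * c k)" unfolding cc_def by (intro sum.cong) auto
  finally have pM: "p \<in> M" using c(2) by simp
  define Phi where "Phi = (\<lambda>f d. \<Sum>k<Suc N. SF f d x k * cc k)"
  let ?a = "\<lambda>i::nat. x^i"
  have Phi_base: "Phi ?a d \<in> Em" for d
  proof -
    let ?S = "\<lambda>k. SF ?a d x k"
    have trm: "x * (?S k * cc k) - (?S k * cc k) * x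
        = (x^k * cc k) * d - d * (x^k * cc k) + (x^k * (d * cc k - cc k * d) + ?S k * (x * cc k - cc k * x))" for k
    proof -
      have h: "x * ?S k = ?S k * x + (x^k * d - d * x^k)" using SF_comm[of x d k]
        by (simp add: algebra_simps)
      have "x * (?S k * cc k) = (x * ?S k) * cc k" by (simp add: mult.assoc)
      also have "\<dots> = (?S k * x + (x^k * d - d * x^k)) * cc k" using h by simp
      finally show ?thesis by (simp add: algebra_simps)
    qed
    have restM: "(x^k * (d * cc k - cc k * d) + ?S k * (x * cc k - cc k * x)) \<in> M" if "k < Suc N" for k
    proof -
      have z: "cc k \<in> Zm" using ccZ that .
      have "cc k * d - d * cc k \<in> M" using z unfolding Zm_def by blast
      then have "d * cc k - cc k * d \<in> M" by (rule Mswap)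
      then have m1: "x^k * (d * cc k - cc k * d) \<in> M" by (rule Mlm)
      have "cc k * x - x * cc k \<in> M" using z unfolding Zm_def by blast
      then have "x * cc k - cc k * x \<in> M" by (rule Mswap)
      then have m2: "?S k * (x * cc k - cc k * x) \<in> M" by (rule Mlm)
      show ?thesis using Madd[OF m1 m2] .
    qed
    have "x * Phi ?a d - Phi ?a d * x = (\<Sum>k<Suc N. x * (?S k * cc k) - (?S k * cc k) * x)"
      unfolding Phi_def by (simp only: sum_distrib_left sum_distrib_right sum_subtractf)
    also have "\<dots> = (\<Sum>k<Suc N. (x^k * cc k) * d - d * (x^k * cc k))
          + (\<Sum>k<Suc N. x^k * (d * cc k - cc k * d) + ?S k * (x * cc k - cc k * x))"
      unfolding trm by (simp only: sum.distrib)
    also have "(\<Sum>k<Suc N. (x^k * cc k) * d - d * (x^k * cc k)) = p * d - d * p"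
      unfolding p_def by (simp only: sum_distrib_left sum_distrib_right sum_subtractf mult.assoc)
    finally have eq: "x * Phi ?a d - Phi ?a d * x = p * d - d * p
          + (\<Sum>k<Suc N. x^k * (d * cc k - cc k * d) + ?S k * (x * cc k - cc k * x))" .
    have "p * d - d * p \<in> M" using pM Mrm Mlm Mdiff by blast
    moreover have "(\<Sum>k<Suc N. x^k * (d * cc k - cc k * d) + ?S k * (x * cc k - cc k * x)) \<in> M"
      using restM by (intro Msum) auto
    ultimately have "x * Phi ?a d - Phi ?a d * x \<in> M" unfolding eq by (rule Madd)
    then have "Phi ?a d * x - x * Phi ?a d \<in> M" by (rule Mswap)
    then show ?thesis unfolding Em_def by simp
  qed
  have Phi_add: "Phi (\<lambda>i. f i + g i) d = Phi f d + Phi g d" for f g d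
    unfolding Phi_def by (simp only: SF_add distrib_right sum.distrib)
  have Phi_lm: "Phi (\<lambda>i. t * f i) d = t * Phi f d" for f t d
    unfolding Phi_def by (simp only: SF_lm mult.assoc sum_distrib_left)
  have Phi_rm: "Phi (\<lambda>i. f i * t) d = Phi f (t * d)" for f t d
    unfolding Phi_def by (simp add: SF_rm)
  have Phi_zero: "Phi (\<lambda>i. 0) d = 0" for d
    unfolding Phi_def by (simp add: SF_zero)
  define Good where "Good = (\<lambda>f G. finite G \<and> (\<forall>R d. is_subring R \<longrightarrow> Em \<subseteq> R \<longrightarrow> G \<subseteq> R \<longrightarrow> Phi f d \<in> R))"
  have gen: "f \<in> bim ?a \<Longrightarrow> \<exists>G. Good f G" for f
  proof (induction rule: bim.induct)
    case base
    have "Good ?a {}" unfolding Good_def using Phi_base by blast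
    then show ?case by blast
  next
    case zero
    have "Good (\<lambda>i. 0) {}" unfolding Good_def Phi_zero is_subring_def by simp
    then show ?case by blast
  next
    case (add f g)
    from add.IH obtain G1 G2 where G1: "Good f G1" and G2: "Good g G2" by blast
    have "Good (\<lambda>i. f i + g i) (G1 \<union> G2)"
      unfolding Good_def
    proof (intro conjI allI impI)
      show "finite (G1 \<union> G2)" using G1 G2 unfolding Good_def by simp
      fix R d assume R: "is_subring R" "Em \<subseteq> R" "G1 \<union> G2 \<subseteq> R"
      have a1: "Phi f d \<in> R" using G1 R unfolding Good_def by simp
      have a2: "Phi g d \<in> R" using G2 R unfolding Good_def by simp
      show "Phi (\<lambda>i. f i + g i) d \<in> R" unfolding Phi_add using R(1) a1 a2 unfolding is_subring_def by simp
    qed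
    then show ?case by blast
  next
    case (lm f t)
    from lm.IH obtain G where G: "Good f G" by blast
    have "Good (\<lambda>i. t * f i) (insert t G)"
      unfolding Good_def
    proof (intro conjI allI impI)
      show "finite (insert t G)" using G unfolding Good_def by simp
      fix R d assume R: "is_subring R" "Em \<subseteq> R" "insert t G \<subseteq> R"
      have a1: "Phi f d \<in> R" using G R unfolding Good_def by simp
      have a2: "t \<in> R" using R by simp
      show "Phi (\<lambda>i. t * f i) d \<in> R" unfolding Phi_lm using R(1) a1 a2 unfolding is_subring_def by simp
    qed
    then show ?case by blast
  next
    case (rm f t)
    from rm.IH obtain G where G: "Good f G" by blast
    have "Good (\<lambda>i. f i * t) G"
      unfolding Good_def
    proof (intro conjI allI impI)
      show "finite G" using G unfolding Good_def by simp
      fix R d assume R: "is_subring R" "Em \<subseteq> R" "G \<subseteq> R"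
      have a1: "Phi f (t * d) \<in> R" using G R unfolding Good_def by simp
      show "Phi (\<lambda>i. f i * t) d \<in> R" unfolding Phi_rm by (rule a1)
    qed
    then show ?case by blast
  qed
  define g where "g = (\<lambda>i::nat. if i = N - 1 then (1::'a) else 0)"
  obtain f where f: "f \<in> bim ?a" "\<forall>i<N. f i - g i \<in> M" using bim_hit[of N] by blast
  obtain G where GG: "Good f G" using gen[OF f(1)] by blast
  have G: "finite G" "\<And>R d. is_subring R \<Longrightarrow> Em \<subseteq> R \<Longrightarrow> G \<subseteq> R \<Longrightarrow> Phi f d \<in> R"
    using GG unfolding Good_def by auto
  have Phi_d: "Phi f d - d \<in> M" for d
  proof -
    have SFg0: "SF g d x k = 0" if "k < N" for k
      using that
    proof (induction k)
      case 0 then show ?case by simp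
    next
      case (Suc k)
      then have "g k = 0" unfolding g_def by simp
      then show ?case using Suc by simp
    qed
    have SFgN: "SF g d x N = d"
    proof -
      obtain N' where N': "N = Suc N'" using N_ge1 by (cases N) auto
      show ?thesis using SFg0[of N'] N' by (simp add: g_def)
    qed
    have "(\<Sum>k<Suc N. SF g d x k * cc k) = SF g d x N * cc N + (\<Sum>k<N. SF g d x k * cc k)" by simp
    also have "(\<Sum>k<N. SF g d x k * cc k) = 0" using SFg0 by simp
    finally have sg: "(\<Sum>k<Suc N. SF g d x k * cc k) = d" using SFgN by (simp add: cc_def)
    have "Phi f d - (\<Sum>k<Suc N. SF g d x k * cc k) = (\<Sum>k<Suc N. (SF f d x k - SF g d x k) * cc k)"
      unfolding Phi_def by (simp only: left_diff_distrib sum_subtractf)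
    then have "Phi f d - d = (\<Sum>k<Suc N. (SF f d x k - SF g d x k) * cc k)" unfolding sg .
    moreover have "(\<Sum>k<Suc N. (SF f d x k - SF g d x k) * cc k) \<in> M"
    proof (intro Msum ballI)
      show "finite {..<Suc N}" by simp
      fix k assume "k \<in> {..<Suc N}"
      then have "\<forall>i<k. f i - g i \<in> M" using f(2) by auto
      then have "SF f d x k - SF g d x k \<in> M" using SF_cong[OF li rid, of k f g d x] by blast
      then show "(SF f d x k - SF g d x k) * cc k \<in> M" by (rule Mrm)
    qed
    ultimately show ?thesis by simp
  qed
  have full: "R = UNIV" if R: "is_subring R" "Em \<subseteq> R" "G \<subseteq> R" for R
  proof -
    { fix d
      have "Phi f d \<in> R" using G(2) R by blast
      moreover have "-(Phi f d - d) \<in> R" using Phi_d Mneg M_Em R(2) by blast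
      ultimately have "Phi f d + -(Phi f d - d) \<in> R" using R(1) unfolding is_subring_def by blast
      then have "d \<in> R" by simp }
    then show ?thesis by blast
  qed
  have GEm: "\<not> G \<subseteq> Em" using full[OF Em_sub] y_Em by blast
  define A where "A = {R. is_subring R \<and> Em \<subseteq> R \<and> \<not> G \<subseteq> R}"
  have EmA: "Em \<in> A" unfolding A_def using Em_sub GEm by blast
  have ZL: "\<forall>C\<in>chains A. \<exists>U\<in>A. \<forall>X\<in>C. X \<subseteq> U"
  proof
    fix C assume C: "C \<in> chains A"
    show "\<exists>U\<in>A. \<forall>X\<in>C. X \<subseteq> U"
    proof (cases "C = {}")
      case True then show ?thesis using EmA by blast
    next
      case False
      have CA: "C \<subseteq> A" and ch: "\<forall>X\<in>C. \<forall>Y\<in>C. X \<subseteq> Y \<or> Y \<subseteq> X"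
        using C unfolding chains_def chain_subset_def by auto
      have sub: "is_subring (\<Union>C)"
        unfolding is_subring_def
      proof (intro conjI ballI)
        obtain X0 where X0: "X0 \<in> C" using False by blast
        then have "is_subring X0" using CA unfolding A_def by blast
        then show "1 \<in> \<Union>C" "0 \<in> \<Union>C" using X0 unfolding is_subring_def by auto
      next
        fix a b assume "a \<in> \<Union>C" "b \<in> \<Union>C"
        then obtain X Y where XY: "X \<in> C" "Y \<in> C" "a \<in> X" "b \<in> Y" by blast
        then have "X \<subseteq> Y \<or> Y \<subseteq> X" using ch by blast
        then obtain Z where Z: "Z \<in> C" "a \<in> Z" "b \<in> Z" using XY by blast
        then have "is_subring Z" using CA unfolding A_def by blast
        then have "a + b \<in> Z \<and> a * b \<in> Z" using Z unfolding is_subring_def by blast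
        then show "a + b \<in> \<Union>C" "a * b \<in> \<Union>C" using Z by auto
      next
        fix a assume "a \<in> \<Union>C"
        then obtain X where X: "X \<in> C" "a \<in> X" by blast
        then have "is_subring X" using CA unfolding A_def by blast
        then show "- a \<in> \<Union>C" using X unfolding is_subring_def by blast
      qed
      have emU: "Em \<subseteq> \<Union>C" using False CA unfolding A_def by blast
      have "\<not> G \<subseteq> \<Union>C"
      proof
        assume GU: "G \<subseteq> \<Union>C"
        have "subset.chain A C" using C unfolding chains_alt_def by simp
        then obtain B where "B \<in> C" "G \<subseteq> B"
          using finite_subset_Union_chain[OF G(1) GU False] by metis
        then show False using CA unfolding A_def by blast
      qed
      then have "\<Union>C \<in> A" unfolding A_def using sub emU by blast
      then show ?thesis by blast
    qed
  qed
  then obtain R0 where R0: "R0 \<in> A" "\<forall>X\<in>A. R0 \<subseteq> X \<longrightarrow> X = R0"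
    using Zorn_Lemma2[OF ZL] by blast
  have "maximal_subring R0"
    unfolding maximal_subring_def
  proof (intro conjI allI impI)
    show "is_subring R0" using R0 unfolding A_def by blast
    show "R0 \<noteq> UNIV" using R0 unfolding A_def by blast
    fix R assume R: "is_subring R \<and> R0 \<subseteq> R"
    have "Em \<subseteq> R" using R R0 unfolding A_def by blast
    show "R = R0 \<or> R = UNIV"
    proof (cases "G \<subseteq> R")
      case True then show ?thesis using full R \<open>Em \<subseteq> R\<close> by blast
    next
      case False
      then have "R \<in> A" unfolding A_def using R \<open>Em \<subseteq> R\<close> by blast
      then show ?thesis using R0 R by blast
    qed
  qed
  then show ?thesis by blast
qed

end


theorem theorem3p6:
  assumes "integral_over_center TYPE('a::ring_1)"
    and "(jacobson :: 'a set) = {0}"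
  shows "(\<exists>S::'a set. maximal_subring S) \<or> (\<forall>x y::'a. x * y = y * x)"
proof (cases "\<forall>x y::'a. x * y = y * x")
  case True then show ?thesis by blast
next
  case False
  then obtain a b :: 'a where ab: "a*b \<noteq> b*a" by blast
  show ?thesis
  proof (cases "\<exists>M::'a set. maximal_left_ideal M \<and> \<not>(\<forall>m\<in>M. \<forall>t. m*t \<in> M)")
    case True
    then obtain M :: "'a set" where "maximal_left_ideal M" "\<not>(\<forall>m\<in>M. \<forall>t. m*t \<in> M)" by blast
    then have "maximal_subring {t. \<forall>m\<in>M. m*t \<in> M}" by (rule idealizer_max)
    then show ?thesis by blast
  next
    case False
    have "a*b - b*a \<noteq> 0" using ab by simp
    then have "a*b - b*a \<notin> (jacobson::'a set)" unfolding assms(2) by simp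
    then obtain M :: "'a set" where M: "maximal_left_ideal M" "a*b - b*a \<notin> M"
      unfolding jacobson_def by blast
    have li: "left_ideal M" and nU: "M \<noteq> UNIV"
      and mx: "\<And>K. left_ideal K \<Longrightarrow> M \<subseteq> K \<Longrightarrow> K = M \<or> K = UNIV"
      using M(1) unfolding maximal_left_ideal_def by auto
    have rid: "\<And>m t. m \<in> M \<Longrightarrow> m*t \<in> M" using False M(1) by blast
    have linv: "\<exists>s. s*t - 1 \<in> M" if t: "t \<notin> M" for t
    proof -
      define K where "K = {r*t + m | r m. m \<in> M}"
      have "left_ideal K"
        unfolding left_ideal_def K_def
      proof (intro conjI ballI allI)
        show "0 \<in> {r*t + m | r m. m \<in> M}"
          using li_zero[OF li] by (intro CollectI exI[of _ 0] exI[of _ 0]) auto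
      next
        fix u v assume "u \<in> {r*t + m | r m. m \<in> M}" "v \<in> {r*t + m | r m. m \<in> M}"
        then obtain r1 m1 r2 m2 where "u = r1*t + m1" "v = r2*t+m2" "m1\<in>M" "m2\<in>M" by blast
        then show "u + v \<in> {r*t + m | r m. m \<in> M}"
          by (intro CollectI exI[of _ "r1+r2"] exI[of _ "m1+m2"]) (auto simp: li_add[OF li] algebra_simps)
      next
        fix u assume "u \<in> {r*t + m | r m. m \<in> M}"
        then obtain r1 m1 where "u = r1*t + m1" "m1\<in>M" by blast
        then show "- u \<in> {r*t + m | r m. m \<in> M}"
          by (intro CollectI exI[of _ "-r1"] exI[of _ "-m1"]) (auto simp: li_neg[OF li] algebra_simps)
      next
        fix q u assume "u \<in> {r*t + m | r m. m \<in> M}"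
        then obtain r1 m1 where "u = r1*t + m1" "m1\<in>M" by blast
        then show "q * u \<in> {r*t + m | r m. m \<in> M}"
          by (intro CollectI exI[of _ "q*r1"] exI[of _ "q*m1"]) (auto simp: li_lm[OF li] algebra_simps)
      qed
      moreover have "M \<subseteq> K" unfolding K_def
      proof
        fix m assume "m \<in> M" then show "m \<in> {r*t + m | r m. m \<in> M}"
          by (intro CollectI exI[of _ 0] exI[of _ m]) auto
      qed
      moreover have "t \<in> K" unfolding K_def using li_zero[OF li]
        by (intro CollectI exI[of _ 1] exI[of _ 0]) auto
      ultimately have "K = UNIV" using mx t by blast
      then have "1 \<in> K" by simp
      then obtain r m where rm: "1 = r*t + m" "m \<in> M" unfolding K_def by blast
      then have "r*t - 1 = - m" by (simp add: algebra_simps)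
      then have "r*t - 1 \<in> M" using li_neg[OF li rm(2)] by simp
      then show ?thesis by blast
    qed
    have integ: "\<exists>n c. n \<ge> 1 \<and> (\<forall>i<n. c i \<in> center) \<and> a^n + (\<Sum>i<n. c i * a^i) = 0"
      using assms(1) unfolding integral_over_center_def by blast
    interpret divcase M a b
      using li nU rid linv M(2) integ by unfold_locales auto
    show ?thesis using exists_max by blast
  qed
qed


end
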